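(* Let $G$ be a finite group and let $M$ be a nonzero cyclic $\mathbb{B}[G]$-module (i.e. generated by a single element as a $\mathbb{B}[G]$-module). Then $M$ is a quasi-free $\mathbb{B}$-module.
   Context: $\mathbb{B}=\{0,1\}$ is the Boolean semifield with $1+1=1$, and $\mathbb{B}[G]$ is the group semiring. For a module $M$ over a semiring $R$, elements $x_1,\dots,x_n\in M$ are quasi-independent if any equation $x_i=\sum_j c_jx_j$ with $c_j\in R$ implies $c_j=\delta_{ij}$ for all $j$; a quasi-basis is a quasi-independent set of generators; $M$ is quasi-free (of finite rank $n$) if it has a quasi-basis with $n$ elements. *)

theory Defs
  imports "HOL-Algebra.Module"
begin

definition semimodule :: "('a, 'c) ring_scheme \<Rightarrow> ('a, 'b, 'd) module_scheme \<Rightarrow> bool" where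
  "semimodule R M \<longleftrightarrow>
     abelian_monoid M \<and>
     (\<forall>r\<in>carrier R. \<forall>m\<in>carrier M. r \<odot>\<^bsub>M\<^esub> m \<in> carrier M) \<and>
     (\<forall>r\<in>carrier R. \<forall>s\<in>carrier R. \<forall>m\<in>carrier M.
        (r \<otimes>\<^bsub>R\<^esub> s) \<odot>\<^bsub>M\<^esub> m = r \<odot>\<^bsub>M\<^esub> (s \<odot>\<^bsub>M\<^esub> m)) \<and>
     (\<forall>r\<in>carrier R. \<forall>s\<in>carrier R. \<forall>m\<in>carrier M.
        (r \<oplus>\<^bsub>R\<^esub> s) \<odot>\<^bsub>M\<^esub> m = (r \<odot>\<^bsub>M\<^esub> m) \<oplus>\<^bsub>M\<^esub> (s \<odot>\<^bsub>M\<^esub> m)) \<and>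
     (\<forall>r\<in>carrier R. \<forall>m\<in>carrier M. \<forall>n\<in>carrier M.
        r \<odot>\<^bsub>M\<^esub> (m \<oplus>\<^bsub>M\<^esub> n) = (r \<odot>\<^bsub>M\<^esub> m) \<oplus>\<^bsub>M\<^esub> (r \<odot>\<^bsub>M\<^esub> n)) \<and>
     (\<forall>m\<in>carrier M. \<one>\<^bsub>R\<^esub> \<odot>\<^bsub>M\<^esub> m = m) \<and>
     (\<forall>m\<in>carrier M. \<zero>\<^bsub>R\<^esub> \<odot>\<^bsub>M\<^esub> m = \<zero>\<^bsub>M\<^esub>) \<and>
     (\<forall>r\<in>carrier R. r \<odot>\<^bsub>M\<^esub> \<zero>\<^bsub>M\<^esub> = \<zero>\<^bsub>M\<^esub>)"

definition Bool_semiring :: "bool ring" where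
  "Bool_semiring = \<lparr>carrier = UNIV, mult = (\<and>), one = True, zero = False, add = (\<or>)\<rparr>"

text \<open>The group semiring B[G]: finitely supported B-valued functions on G, i.e. finite subsets
 of G; addition is union, multiplication is the convolution (set product).\<close>
definition group_semiring_B :: "('g, 'x) monoid_scheme \<Rightarrow> 'g set ring" where
  "group_semiring_B G = \<lparr>carrier = {S. S \<subseteq> carrier G \<and> finite S},
     mult = (\<lambda>S T. {x \<otimes>\<^bsub>G\<^esub> y | x y. x \<in> S \<and> y \<in> T}),
     one = {\<one>\<^bsub>G\<^esub>}, zero = {}, add = (\<union>)\<rparr>"

definition B_to_BG :: "('g, 'x) monoid_scheme \<Rightarrow> bool \<Rightarrow> 'g set" where
  "B_to_BG G b = (if b then {\<one>\<^bsub>G\<^esub>} else {})"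

definition restrict_to_B ::
  "('g, 'x) monoid_scheme \<Rightarrow> ('g set, 'm, 'y) module_scheme \<Rightarrow> (bool, 'm) module" where
  "restrict_to_B G M = \<lparr>carrier = carrier M, mult = mult M, one = one M, zero = zero M,
     add = add M, smult = (\<lambda>b m. B_to_BG G b \<odot>\<^bsub>M\<^esub> m)\<rparr>"

definition cyclic_module :: "('a, 'c) ring_scheme \<Rightarrow> ('a, 'b, 'd) module_scheme \<Rightarrow> bool" where
  "cyclic_module R M \<longleftrightarrow>
     (\<exists>g\<in>carrier M. \<forall>m\<in>carrier M. \<exists>r\<in>carrier R. m = r \<odot>\<^bsub>M\<^esub> g)"

definition lincomb :: "('a, 'b, 'd) module_scheme \<Rightarrow> (nat \<Rightarrow> 'a) \<Rightarrow> (nat \<Rightarrow> 'b) \<Rightarrow> nat \<Rightarrow> 'b" where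
  "lincomb M c x n = foldr (\<lambda>j acc. (c j \<odot>\<^bsub>M\<^esub> x j) \<oplus>\<^bsub>M\<^esub> acc) [0..<n] \<zero>\<^bsub>M\<^esub>"

definition quasi_independent ::
  "('a, 'c) ring_scheme \<Rightarrow> ('a, 'b, 'd) module_scheme \<Rightarrow> (nat \<Rightarrow> 'b) \<Rightarrow> nat \<Rightarrow> bool" where
  "quasi_independent R M x n \<longleftrightarrow>
     (\<forall>i<n. \<forall>c. (\<forall>j<n. c j \<in> carrier R) \<longrightarrow> x i = lincomb M c x n \<longrightarrow>
        (\<forall>j<n. c j = (if j = i then \<one>\<^bsub>R\<^esub> else \<zero>\<^bsub>R\<^esub>)))"

definition quasi_basis ::
  "('a, 'c) ring_scheme \<Rightarrow> ('a, 'b, 'd) module_scheme \<Rightarrow> (nat \<Rightarrow> 'b) \<Rightarrow> nat \<Rightarrow> bool" where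
  "quasi_basis R M x n \<longleftrightarrow>
     (\<forall>j<n. x j \<in> carrier M) \<and>
     (\<forall>m\<in>carrier M. \<exists>c. (\<forall>j<n. c j \<in> carrier R) \<and> m = lincomb M c x n) \<and>
     quasi_independent R M x n"

definition quasi_free :: "('a, 'c) ring_scheme \<Rightarrow> ('a, 'b, 'd) module_scheme \<Rightarrow> bool" where
  "quasi_free R M \<longleftrightarrow> (\<exists>n x. quasi_basis R M x n)"

end

theory Submission
  imports Defs "HOL-Algebra.Multiplicative_Group"
begin

theorem proposition4p12:
  fixes G :: "('g, 'x) monoid_scheme" and M :: "('g set, 'm, 'y) module_scheme"
  assumes "group G" and "finite (carrier G)"
    and "semimodule (group_semiring_B G) M"
    and "cyclic_module (group_semiring_B G) M"
    and "carrier M \<noteq> {\<zero>\<^bsub>M\<^esub>}"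
  shows "quasi_free Bool_semiring (restrict_to_B G M)"
proof -
  interpret grp: group G by fact
  have am: "abelian_monoid M"
    and cl: "\<And>S m. S \<subseteq> carrier G \<Longrightarrow> finite S \<Longrightarrow> m \<in> carrier M \<Longrightarrow> S \<odot>\<^bsub>M\<^esub> m \<in> carrier M"
    and mul: "\<And>S T m. S \<subseteq> carrier G \<Longrightarrow> finite S \<Longrightarrow> T \<subseteq> carrier G \<Longrightarrow> finite T \<Longrightarrow> m \<in> carrier M \<Longrightarrow>
        {x \<otimes>\<^bsub>G\<^esub> y | x y. x \<in> S \<and> y \<in> T} \<odot>\<^bsub>M\<^esub> m = S \<odot>\<^bsub>M\<^esub> (T \<odot>\<^bsub>M\<^esub> m)"
    and un: "\<And>S T m. S \<subseteq> carrier G \<Longrightarrow> finite S \<Longrightarrow> T \<subseteq> carrier G \<Longrightarrow> finite T \<Longrightarrow> m \<in> carrier M \<Longrightarrow>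
        (S \<union> T) \<odot>\<^bsub>M\<^esub> m = (S \<odot>\<^bsub>M\<^esub> m) \<oplus>\<^bsub>M\<^esub> (T \<odot>\<^bsub>M\<^esub> m)"
    and dist: "\<And>S m m'. S \<subseteq> carrier G \<Longrightarrow> finite S \<Longrightarrow> m \<in> carrier M \<Longrightarrow> m' \<in> carrier M \<Longrightarrow>
        S \<odot>\<^bsub>M\<^esub> (m \<oplus>\<^bsub>M\<^esub> m') = (S \<odot>\<^bsub>M\<^esub> m) \<oplus>\<^bsub>M\<^esub> (S \<odot>\<^bsub>M\<^esub> m')"
    and one: "\<And>m. m \<in> carrier M \<Longrightarrow> {\<one>\<^bsub>G\<^esub>} \<odot>\<^bsub>M\<^esub> m = m"
    and zr: "\<And>m. m \<in> carrier M \<Longrightarrow> {} \<odot>\<^bsub>M\<^esub> m = \<zero>\<^bsub>M\<^esub>"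
    and rz: "\<And>S. S \<subseteq> carrier G \<Longrightarrow> finite S \<Longrightarrow> S \<odot>\<^bsub>M\<^esub> \<zero>\<^bsub>M\<^esub> = \<zero>\<^bsub>M\<^esub>"
    using assms(3) unfolding semimodule_def group_semiring_B_def by auto
  interpret am: abelian_monoid M by (rule am)
  have sg: "\<And>a b m. a \<in> carrier G \<Longrightarrow> b \<in> carrier G \<Longrightarrow> m \<in> carrier M \<Longrightarrow>
      {a \<otimes>\<^bsub>G\<^esub> b} \<odot>\<^bsub>M\<^esub> m = {a} \<odot>\<^bsub>M\<^esub> ({b} \<odot>\<^bsub>M\<^esub> m)"
  proof -
    fix a b m assume "a \<in> carrier G" "b \<in> carrier G" "m \<in> carrier M"
    moreover have "{x \<otimes>\<^bsub>G\<^esub> y | x y. x \<in> {a} \<and> y \<in> {b}} = {a \<otimes>\<^bsub>G\<^esub> b}" by auto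
    ultimately show "{a \<otimes>\<^bsub>G\<^esub> b} \<odot>\<^bsub>M\<^esub> m = {a} \<odot>\<^bsub>M\<^esub> ({b} \<odot>\<^bsub>M\<^esub> m)"
      using mul[of "{a}" "{b}" m] by simp
  qed
  obtain g where g: "g \<in> carrier M"
    and gen: "\<And>m. m \<in> carrier M \<Longrightarrow> \<exists>S. S \<subseteq> carrier G \<and> finite S \<and> m = S \<odot>\<^bsub>M\<^esub> g"
    using assms(4) unfolding cyclic_module_def group_semiring_B_def by auto
  have scl: "\<And>a. a \<in> carrier G \<Longrightarrow> {a} \<odot>\<^bsub>M\<^esub> g \<in> carrier M"
    using cl g by auto
  have idem: "\<And>m. m \<in> carrier M \<Longrightarrow> m \<oplus>\<^bsub>M\<^esub> m = m"
  proof -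
    fix m assume m: "m \<in> carrier M"
    have "({\<one>\<^bsub>G\<^esub>} \<union> {\<one>\<^bsub>G\<^esub>}) \<odot>\<^bsub>M\<^esub> m = m" using one m by simp
    thus "m \<oplus>\<^bsub>M\<^esub> m = m" using un[of "{\<one>\<^bsub>G\<^esub>}" "{\<one>\<^bsub>G\<^esub>}" m] one m by simp
  qed
  have anti: "\<And>a b. a \<in> carrier G \<Longrightarrow> b \<in> carrier G \<Longrightarrow>
      ({a} \<odot>\<^bsub>M\<^esub> g) \<oplus>\<^bsub>M\<^esub> ({b} \<odot>\<^bsub>M\<^esub> g) = {b} \<odot>\<^bsub>M\<^esub> g \<Longrightarrow> {a} \<odot>\<^bsub>M\<^esub> g = {b} \<odot>\<^bsub>M\<^esub> g"
  proof -
    fix a b assume a: "a \<in> carrier G" and b: "b \<in> carrier G"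
      and le: "({a} \<odot>\<^bsub>M\<^esub> g) \<oplus>\<^bsub>M\<^esub> ({b} \<odot>\<^bsub>M\<^esub> g) = {b} \<odot>\<^bsub>M\<^esub> g"
    define d where "d = inv\<^bsub>G\<^esub> b \<otimes>\<^bsub>G\<^esub> a"
    have d: "d \<in> carrier G" using a b d_def by simp
    have ib: "inv\<^bsub>G\<^esub> b \<in> carrier G" using b by simp
    have "{inv\<^bsub>G\<^esub> b} \<odot>\<^bsub>M\<^esub> (({a} \<odot>\<^bsub>M\<^esub> g) \<oplus>\<^bsub>M\<^esub> ({b} \<odot>\<^bsub>M\<^esub> g))
        = {inv\<^bsub>G\<^esub> b} \<odot>\<^bsub>M\<^esub> ({b} \<odot>\<^bsub>M\<^esub> g)" using le by simp
    hence dg: "({d} \<odot>\<^bsub>M\<^esub> g) \<oplus>\<^bsub>M\<^esub> g = g"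
      using dist[of "{inv\<^bsub>G\<^esub> b}"] sg[OF ib a g] sg[OF ib b g] scl a b ib one g
      by (simp add: d_def)
    have pw: "\<And>k. ({d [^]\<^bsub>G\<^esub> (k::nat)} \<odot>\<^bsub>M\<^esub> g) \<oplus>\<^bsub>M\<^esub> g = g"
    proof -
      fix k show "({d [^]\<^bsub>G\<^esub> (k::nat)} \<odot>\<^bsub>M\<^esub> g) \<oplus>\<^bsub>M\<^esub> g = g"
      proof (induction k)
        case 0
        then show ?case using one g idem by simp
      next
        case (Suc k)
        have dk: "d [^]\<^bsub>G\<^esub> k \<in> carrier G" using d by simp
        have e1: "{d [^]\<^bsub>G\<^esub> Suc k} \<odot>\<^bsub>M\<^esub> g = {d} \<odot>\<^bsub>M\<^esub> ({d [^]\<^bsub>G\<^esub> k} \<odot>\<^bsub>M\<^esub> g)"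
          using sg[OF d dk g] grp.nat_pow_Suc2[OF d] by simp
        have "({d} \<odot>\<^bsub>M\<^esub> ({d [^]\<^bsub>G\<^esub> k} \<odot>\<^bsub>M\<^esub> g)) \<oplus>\<^bsub>M\<^esub> g
            = ({d} \<odot>\<^bsub>M\<^esub> ({d [^]\<^bsub>G\<^esub> k} \<odot>\<^bsub>M\<^esub> g)) \<oplus>\<^bsub>M\<^esub> (({d} \<odot>\<^bsub>M\<^esub> g) \<oplus>\<^bsub>M\<^esub> g)"
          using dg by simp
        also have "\<dots> = (({d} \<odot>\<^bsub>M\<^esub> ({d [^]\<^bsub>G\<^esub> k} \<odot>\<^bsub>M\<^esub> g)) \<oplus>\<^bsub>M\<^esub> ({d} \<odot>\<^bsub>M\<^esub> g)) \<oplus>\<^bsub>M\<^esub> g"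
          using am.a_assoc scl d dk cl g by simp
        also have "\<dots> = ({d} \<odot>\<^bsub>M\<^esub> (({d [^]\<^bsub>G\<^esub> k} \<odot>\<^bsub>M\<^esub> g) \<oplus>\<^bsub>M\<^esub> g)) \<oplus>\<^bsub>M\<^esub> g"
          using dist[of "{d}"] scl d dk g by simp
        also have "\<dots> = g" using Suc dg by simp
        finally show ?case using e1 by simp
      qed
    qed
    obtain k where N: "order G = Suc k"
      using grp.order_gt_0_iff_finite assms(2) gr0_implies_Suc by blast
    have dk: "d [^]\<^bsub>G\<^esub> k \<in> carrier G" using d by simp
    have "d \<otimes>\<^bsub>G\<^esub> d [^]\<^bsub>G\<^esub> k = \<one>\<^bsub>G\<^esub>"
      using grp.pow_order_eq_1[OF d] N grp.nat_pow_Suc2[OF d] by simp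
    hence gd: "{d} \<odot>\<^bsub>M\<^esub> ({d [^]\<^bsub>G\<^esub> k} \<odot>\<^bsub>M\<^esub> g) = g"
      using sg[OF d dk g] one g by simp
    have "{d} \<odot>\<^bsub>M\<^esub> g = {d} \<odot>\<^bsub>M\<^esub> (({d [^]\<^bsub>G\<^esub> k} \<odot>\<^bsub>M\<^esub> g) \<oplus>\<^bsub>M\<^esub> g)"
      using pw[of k] by simp
    also have "\<dots> = g \<oplus>\<^bsub>M\<^esub> ({d} \<odot>\<^bsub>M\<^esub> g)"
      using dist[of "{d}"] scl d dk g gd by simp
    also have "\<dots> = g" using dg am.a_comm g scl d by simp
    finally have dgg: "{d} \<odot>\<^bsub>M\<^esub> g = g" .
    have "b \<otimes>\<^bsub>G\<^esub> d = a" using a b d_def grp.m_assoc[symmetric] by (simp add: grp.r_inv)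
    hence "{a} \<odot>\<^bsub>M\<^esub> g = {b} \<odot>\<^bsub>M\<^esub> ({d} \<odot>\<^bsub>M\<^esub> g)" using sg[OF b d g] by simp
    thus "{a} \<odot>\<^bsub>M\<^esub> g = {b} \<odot>\<^bsub>M\<^esub> g" using dgg by simp
  qed
  have absorb: "\<And>S T. finite S \<Longrightarrow> S \<subseteq> carrier G \<Longrightarrow> finite T \<Longrightarrow> T \<subseteq> carrier G \<Longrightarrow>
      (\<forall>s\<in>S. \<exists>t\<in>T. {s} \<odot>\<^bsub>M\<^esub> g = {t} \<odot>\<^bsub>M\<^esub> g) \<Longrightarrow> (S \<union> T) \<odot>\<^bsub>M\<^esub> g = T \<odot>\<^bsub>M\<^esub> g"
  proof -
    fix S T assume "finite S" "S \<subseteq> carrier G" and T: "finite T" "T \<subseteq> carrier G"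
      and "\<forall>s\<in>S. \<exists>t\<in>T. {s} \<odot>\<^bsub>M\<^esub> g = {t} \<odot>\<^bsub>M\<^esub> g"
    thus "(S \<union> T) \<odot>\<^bsub>M\<^esub> g = T \<odot>\<^bsub>M\<^esub> g"
    proof (induction S rule: finite_induct)
      case empty
      then show ?case by simp
    next
      case (insert s S)
      obtain t where t: "t \<in> T" "{s} \<odot>\<^bsub>M\<^esub> g = {t} \<odot>\<^bsub>M\<^esub> g" using insert by auto
      have "(insert s S \<union> T) \<odot>\<^bsub>M\<^esub> g = ({s} \<union> (S \<union> T)) \<odot>\<^bsub>M\<^esub> g" by simp
      also have "\<dots> = ({s} \<odot>\<^bsub>M\<^esub> g) \<oplus>\<^bsub>M\<^esub> ((S \<union> T) \<odot>\<^bsub>M\<^esub> g)"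
        using un[of "{s}" "S \<union> T" g] insert T g by simp
      also have "\<dots> = ({t} \<odot>\<^bsub>M\<^esub> g) \<oplus>\<^bsub>M\<^esub> (T \<odot>\<^bsub>M\<^esub> g)" using insert t by simp
      also have "\<dots> = ({t} \<union> T) \<odot>\<^bsub>M\<^esub> g" using un[of "{t}" T g] t T g by auto
      also have "\<dots> = T \<odot>\<^bsub>M\<^esub> g" using t by (simp add: insert_absorb)
      finally show ?case .
    qed
  qed
  define Orb where "Orb = (\<lambda>a. {a} \<odot>\<^bsub>M\<^esub> g) ` carrier G"
  have "finite Orb" using assms(2) Orb_def by simp
  then obtain xs where xs: "set xs = Orb" "distinct xs" using finite_distinct_list by blast
  define n where "n = length xs"
  define x where "x = (\<lambda>j. xs ! j)"
  have "\<forall>j<n. \<exists>a. a \<in> carrier G \<and> x j = {a} \<odot>\<^bsub>M\<^esub> g"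
    using xs Orb_def x_def n_def nth_mem by fastforce
  then obtain h where h: "\<And>j. j < n \<Longrightarrow> h j \<in> carrier G \<and> x j = {h j} \<odot>\<^bsub>M\<^esub> g" by metis
  have lc_list: "\<And>js. set js \<subseteq> {..<n} \<Longrightarrow>
      foldr (\<lambda>j acc. (B_to_BG G (c j) \<odot>\<^bsub>M\<^esub> x j) \<oplus>\<^bsub>M\<^esub> acc) js \<zero>\<^bsub>M\<^esub>
      = {h j | j. j \<in> set js \<and> c j} \<odot>\<^bsub>M\<^esub> g" for c
  proof -
    fix js :: "nat list" assume "set js \<subseteq> {..<n}"
    thus "foldr (\<lambda>j acc. (B_to_BG G (c j) \<odot>\<^bsub>M\<^esub> x j) \<oplus>\<^bsub>M\<^esub> acc) js \<zero>\<^bsub>M\<^esub>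
      = {h j | j. j \<in> set js \<and> c j} \<odot>\<^bsub>M\<^esub> g"
    proof (induction js)
      case Nil
      then show ?case using zr g by simp
    next
      case (Cons j js)
      let ?T = "{h j | j. j \<in> set js \<and> c j}"
      have jn: "j < n" using Cons by simp
      have Tsub: "?T \<subseteq> carrier G" using Cons h by auto
      have "?T \<subseteq> h ` set js" by auto
      hence Tfin: "finite ?T" using finite_subset by blast
      have Tc: "?T \<odot>\<^bsub>M\<^esub> g \<in> carrier M" using cl Tsub Tfin g by simp
      have IH: "foldr (\<lambda>j acc. (B_to_BG G (c j) \<odot>\<^bsub>M\<^esub> x j) \<oplus>\<^bsub>M\<^esub> acc) js \<zero>\<^bsub>M\<^esub> = ?T \<odot>\<^bsub>M\<^esub> g"
        using Cons by simp
      show ?case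
      proof (cases "c j")
        case True
        have eq: "{h j' | j'. j' \<in> set (j # js) \<and> c j'} = {h j} \<union> ?T" using True by auto
        have "(B_to_BG G (c j) \<odot>\<^bsub>M\<^esub> x j) = {h j} \<odot>\<^bsub>M\<^esub> g"
          using True h[OF jn] one scl unfolding B_to_BG_def by simp
        then show ?thesis using IH eq un[of "{h j}" ?T g] h[OF jn] Tsub Tfin g by simp
      next
        case False
        have eq: "{h j' | j'. j' \<in> set (j # js) \<and> c j'} = ?T" using False by auto
        have "(B_to_BG G (c j) \<odot>\<^bsub>M\<^esub> x j) = \<zero>\<^bsub>M\<^esub>"
          using False h[OF jn] zr scl unfolding B_to_BG_def by simp
        then show ?thesis using IH eq Tc by simp
      qed
    qed
  qed
  have lc: "lincomb (restrict_to_B G M) c x n = {h j | j. j < n \<and> c j} \<odot>\<^bsub>M\<^esub> g" for c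
  proof -
    have s: "set [0..<n] \<subseteq> {..<n}" by auto
    have "{h j | j. j \<in> set [0..<n] \<and> c j} = {h j | j. j < n \<and> c j}" by auto
    thus ?thesis using lc_list[OF s, of c] unfolding lincomb_def restrict_to_B_def by simp
  qed
  have Tsub: "{h j | j. j < n \<and> c j} \<subseteq> carrier G" for c using h by auto
  have Tfin: "finite {h j | j. j < n \<and> c j}" for c
  proof -
    have "{h j | j. j < n \<and> c j} \<subseteq> h ` {..<n}" by auto
    thus ?thesis using finite_subset by blast
  qed
  have xcar: "\<forall>j<n. x j \<in> carrier M" using h scl by auto
  have span: "\<forall>m\<in>carrier M. \<exists>c. m = lincomb (restrict_to_B G M) c x n"
  proof
    fix m assume "m \<in> carrier M"
    then obtain S where S: "S \<subseteq> carrier G" "finite S" "m = S \<odot>\<^bsub>M\<^esub> g" using gen by blast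
    define c where "c = (\<lambda>j. \<exists>s\<in>S. x j = {s} \<odot>\<^bsub>M\<^esub> g)"
    let ?T = "{h j | j. j < n \<and> c j}"
    have 1: "\<forall>s\<in>S. \<exists>t\<in>?T. {s} \<odot>\<^bsub>M\<^esub> g = {t} \<odot>\<^bsub>M\<^esub> g"
    proof
      fix s assume s: "s \<in> S"
      hence "{s} \<odot>\<^bsub>M\<^esub> g \<in> set xs" using xs Orb_def S by auto
      then obtain j where j: "j < n" "x j = {s} \<odot>\<^bsub>M\<^esub> g"
        by (metis in_set_conv_nth n_def x_def)
      hence "c j" using s c_def by auto
      thus "\<exists>t\<in>?T. {s} \<odot>\<^bsub>M\<^esub> g = {t} \<odot>\<^bsub>M\<^esub> g" using j h[OF j(1)] by auto
    qed
    have 2: "\<forall>t\<in>?T. \<exists>s\<in>S. {t} \<odot>\<^bsub>M\<^esub> g = {s} \<odot>\<^bsub>M\<^esub> g"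
      using h c_def by fastforce
    have "(S \<union> ?T) \<odot>\<^bsub>M\<^esub> g = ?T \<odot>\<^bsub>M\<^esub> g" using absorb[OF S(2) S(1) Tfin Tsub 1] .
    moreover have "(?T \<union> S) \<odot>\<^bsub>M\<^esub> g = S \<odot>\<^bsub>M\<^esub> g" using absorb[OF Tfin Tsub S(2) S(1) 2] .
    ultimately have "m = ?T \<odot>\<^bsub>M\<^esub> g" using S(3) by (simp add: Un_commute)
    hence "m = lincomb (restrict_to_B G M) c x n" using lc[of c] by simp
    thus "\<exists>c. m = lincomb (restrict_to_B G M) c x n" by blast
  qed
  have indep: "quasi_independent Bool_semiring (restrict_to_B G M) x n"
    unfolding quasi_independent_def
  proof (intro allI impI)
    fix i c j assume i: "i < n" and "\<forall>j<n. c j \<in> carrier Bool_semiring"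
      and xi: "x i = lincomb (restrict_to_B G M) c x n" and j: "j < n"
    let ?T = "{h j | j. j < n \<and> c j}"
    have xiT: "x i = ?T \<odot>\<^bsub>M\<^esub> g" using xi lc by simp
    have cj: "c j' \<Longrightarrow> j' = i" if j': "j' < n" for j'
    proof -
      assume cj': "c j'"
      have "insert (h j') ?T = ?T" using cj' j' by blast
      hence "x j' \<oplus>\<^bsub>M\<^esub> x i = x i"
        using un[of "{h j'}" ?T g] h[OF j'] Tsub Tfin g xiT by simp
      hence "x j' = x i" using anti h[OF j'] h[OF i] by metis
      thus "j' = i" using xs(2) j' i unfolding x_def n_def by (simp add: nth_eq_iff_index_eq)
    qed
    have ci: "c i"
    proof (rule ccontr)
      assume "\<not> c i"
      hence T0: "?T = {}" using cj by auto
      have "x i = {} \<odot>\<^bsub>M\<^esub> g" using xiT unfolding T0 .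
      hence x0: "{h i} \<odot>\<^bsub>M\<^esub> g = \<zero>\<^bsub>M\<^esub>" using zr g h[OF i] by simp
      have hi: "h i \<in> carrier G" using h[OF i] by simp
      have ihi: "inv\<^bsub>G\<^esub> h i \<in> carrier G" using hi by simp
      have "g = {inv\<^bsub>G\<^esub> h i \<otimes>\<^bsub>G\<^esub> h i} \<odot>\<^bsub>M\<^esub> g" using one[OF g] hi grp.l_inv by simp
      also have "\<dots> = {inv\<^bsub>G\<^esub> h i} \<odot>\<^bsub>M\<^esub> \<zero>\<^bsub>M\<^esub>" using sg[OF ihi hi g] x0 by simp
      also have "\<dots> = \<zero>\<^bsub>M\<^esub>" using rz[of "{inv\<^bsub>G\<^esub> h i}"] ihi by simp
      finally have g0: "g = \<zero>\<^bsub>M\<^esub>" .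
      have "carrier M = {\<zero>\<^bsub>M\<^esub>}"
      proof
        show "carrier M \<subseteq> {\<zero>\<^bsub>M\<^esub>}"
        proof
          fix m assume "m \<in> carrier M"
          then obtain S where S: "S \<subseteq> carrier G" "finite S" "m = S \<odot>\<^bsub>M\<^esub> g" using gen by blast
          have "m = \<zero>\<^bsub>M\<^esub>" using S(3) rz[OF S(1) S(2)] g0 by simp
          thus "m \<in> {\<zero>\<^bsub>M\<^esub>}" by simp
        qed
      qed simp
      thus False using assms(5) by simp
    qed
    show "c j = (if j = i then \<one>\<^bsub>Bool_semiring\<^esub> else \<zero>\<^bsub>Bool_semiring\<^esub>)"
    proof (cases "j = i")
      case True
      then show ?thesis using ci unfolding Bool_semiring_def by simp
    next
      case False
      then show ?thesis using cj[OF j] unfolding Bool_semiring_def by auto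
    qed
  qed
  have "quasi_basis Bool_semiring (restrict_to_B G M) x n"
    unfolding quasi_basis_def using xcar span indep
    by (simp add: restrict_to_B_def Bool_semiring_def)
  thus ?thesis unfolding quasi_free_def by blast
qed

end
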